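(* Let $X$ be a $k$-dimensional simplicial complex with $n$ vertices and complete $(k-1)$-skeleton. Fix $d>0$ and $f\ge0$ such that for every $F\in X_{k-2}$, $$\sum_{v\in V\setminus F}\big(\deg_{\mathrm{lk}F}(v)-d\big)^2\le f^2(n-k+1).$$ Then (i) $|\langle A_{k-1}b,b\rangle-d|\le kf$ for all $b\in B^{k-1}(X)$ with $\|b\|=1$, and (ii) $|\langle A_{k-1}b,z\rangle|\le kf$ for all unit $b\in B^{k-1}(X)$ and unit $z$ orthogonal to $B^{k-1}(X)$.
   Context: Standard Euclidean inner products and norms. Complexes have linearly ordered vertex sets $V$; $X_i$ is the set of $i$-faces; $[F:G]$ is the oriented incidence number ($(-1)^j$ if $F\setminus G=\{v_j\}$, $F=\{v_0<\dots<v_i\}$; $0$ if $G\not\subseteq F$). Complete $(k-1)$-skeleton: every vertex set of size at most $k$ is a face. $B^{k-1}(X)=\operatorname{im}\delta_{k-2}$, $(\delta f)(H)=\sum_G[H:G]f(G)$. $A_{k-1}(X)$ is the $X_{k-1}\times X_{k-1}$ matrix with entry $[F:F\cap G][G:F\cap G]$ if $|F\cap G|=k-1$ and $F\cup G\in X_k$, else $0$. For $F\in X_{k-2}$, $\mathrm{lk}\,F$ is the graph on $V\setminus F$ with edges $\{u,v\}$ such that $F\cup\{u,v\}\in X_k$. *)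

theory Defs
  imports Main "HOL-Library.Sum_of_Squares"
begin

text \<open>Simplicial complexes on a finite linearly ordered vertex set V, faces are vertex sets.
  A face of dimension i has i+1 vertices.\<close>

definition simplicial_complex :: "'a set \<Rightarrow> 'a set set \<Rightarrow> bool" where
  "simplicial_complex V X \<longleftrightarrow> finite V \<and> X \<subseteq> Pow V \<and>
     (\<forall>F\<in>X. \<forall>G. G \<subseteq> F \<longrightarrow> G \<in> X)"

text \<open>X_i, the i-faces (i+1 vertices); here indexed by the number of vertices.\<close>
definition faces_card :: "'a set set \<Rightarrow> nat \<Rightarrow> 'a set set" where
  "faces_card X m = {F\<in>X. card F = m}"

definition complex_dim :: "'a set set \<Rightarrow> nat \<Rightarrow> bool" where
  "complex_dim X k \<longleftrightarrow> (\<forall>F\<in>X. card F \<le> k + 1) \<and> (\<exists>F\<in>X. card F = k + 1)"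

definition complete_skeleton :: "'a set \<Rightarrow> 'a set set \<Rightarrow> nat \<Rightarrow> bool" where
  "complete_skeleton V X k \<longleftrightarrow> (\<forall>F. F \<subseteq> V \<and> card F \<le> k \<longrightarrow> F \<in> X)"

definition incidence :: "'a::linorder set \<Rightarrow> 'a set \<Rightarrow> real" where
  "incidence F G = (if G \<subseteq> F \<and> card (F - G) = 1
      then (-1) ^ card {u\<in>F. u < the_elem (F - G)} else 0)"

definition cobdry :: "'a::linorder set set \<Rightarrow> nat \<Rightarrow> ('a set \<Rightarrow> real) \<Rightarrow> 'a set \<Rightarrow> real" where
  "cobdry X m g H = (\<Sum>G\<in>faces_card X m. incidence H G * g G)"

text \<open>B^{k-1}(X) = image of \<delta>_{k-2}, cochains on X_{k-1} (k vertices).\<close>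
definition coboundaries :: "'a::linorder set set \<Rightarrow> nat \<Rightarrow> ('a set \<Rightarrow> real) set" where
  "coboundaries X k = {b. \<exists>g. \<forall>H\<in>faces_card X k. b H = cobdry X (k - 1) g H}"

definition cinner :: "'a set set \<Rightarrow> nat \<Rightarrow> ('a set \<Rightarrow> real) \<Rightarrow> ('a set \<Rightarrow> real) \<Rightarrow> real" where
  "cinner X k f g = (\<Sum>F\<in>faces_card X k. f F * g F)"

definition cnorm :: "'a set set \<Rightarrow> nat \<Rightarrow> ('a set \<Rightarrow> real) \<Rightarrow> real" where
  "cnorm X k f = sqrt (cinner X k f f)"

definition adj_entry :: "'a::linorder set set \<Rightarrow> nat \<Rightarrow> 'a set \<Rightarrow> 'a set \<Rightarrow> real" where
  "adj_entry X k F G = (if card (F \<inter> G) = k - 1 \<and> F \<union> G \<in> faces_card X (k + 1)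
      then incidence F (F \<inter> G) * incidence G (F \<inter> G) else 0)"

definition adj_apply :: "'a::linorder set set \<Rightarrow> nat \<Rightarrow> ('a set \<Rightarrow> real) \<Rightarrow> 'a set \<Rightarrow> real" where
  "adj_apply X k b F = (\<Sum>G\<in>faces_card X k. adj_entry X k F G * b G)"

definition link_deg :: "'a set \<Rightarrow> 'a set set \<Rightarrow> nat \<Rightarrow> 'a set \<Rightarrow> 'a \<Rightarrow> nat" where
  "link_deg V X k F v = card {u\<in>V - F. u \<noteq> v \<and> F \<union> {u, v} \<in> faces_card X (k + 1)}"

end

theory Submission imports Defs "HOL-Analysis.Convex" begin

definition sg :: "'a::linorder set \<Rightarrow> 'a \<Rightarrow> real" where
  "sg G x = (-1) ^ card {u\<in>G. u < x}"

lemma sg_sq: "sg G x * sg G x = 1"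
  by (simp add: sg_def flip: power_add)

lemma inc_insert:
  assumes "finite G" "x \<notin> G"
  shows "incidence (insert x G) G = sg G x"
proof -
  have "insert x G - G = {x}" using assms by auto
  moreover have "{u\<in>insert x G. u < x} = {u\<in>G. u < x}" by auto
  ultimately show ?thesis unfolding incidence_def sg_def by auto
qed

lemma sign_swap:
  assumes "finite G" "x \<notin> G" "y \<notin> G" "x \<noteq> y"
  shows "sg G x * sg (insert x G) y = - (sg G y * sg (insert y G) x)"
proof (cases "x < y")
  case True
  have 1: "{u\<in>insert x G. u < y} = insert x {u\<in>G. u < y}" using True by auto
  have 2: "{u\<in>insert y G. u < x} = {u\<in>G. u < x}" using True by auto
  show ?thesis unfolding sg_def 1 2 using assms by (simp add: card_insert_if)
next
  case False
  then have F: "y < x" using assms by auto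
  have 1: "{u\<in>insert y G. u < x} = insert y {u\<in>G. u < x}" using F by auto
  have 2: "{u\<in>insert x G. u < y} = {u\<in>G. u < y}" using F by auto
  show ?thesis unfolding sg_def 1 2 using assms by (simp add: card_insert_if)
qed

definition ks :: "'a set \<Rightarrow> nat \<Rightarrow> 'a set set" where
  "ks V m = {F. F \<subseteq> V \<and> card F = m}"

definition dl :: "('a::linorder set \<Rightarrow> real) \<Rightarrow> 'a set \<Rightarrow> real" where
  "dl g F = (\<Sum>x\<in>F. sg (F - {x}) x * g (F - {x}))"

definition ds :: "'a::linorder set \<Rightarrow> ('a set \<Rightarrow> real) \<Rightarrow> 'a set \<Rightarrow> real" where
  "ds V b G = (\<Sum>x\<in>V - G. sg G x * b (insert x G))"

lemma finite_ks: "finite V \<Longrightarrow> finite (ks V m)"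
  unfolding ks_def by (rule finite_subset[of _ "Pow V"]) auto

lemma reindex_pairs:
  assumes "finite V" "k \<ge> 1"
  shows "(\<Sum>F\<in>ks V k. \<Sum>x\<in>F. \<phi> F x) = (\<Sum>G\<in>ks V (k-1). \<Sum>x\<in>V-G. \<phi> (insert x G) x)"
proof -
  have fin1: "finite (ks V k)" "finite (ks V (k-1))" using assms finite_ks by auto
  have "(\<Sum>F\<in>ks V k. \<Sum>x\<in>F. \<phi> F x) = (\<Sum>(F,x)\<in>(SIGMA F:ks V k. F). \<phi> F x)"
    using fin1 assms by (intro sum.Sigma) (auto simp: ks_def intro: finite_subset)
  also have "\<dots> = (\<Sum>(G,x)\<in>(SIGMA G:ks V (k-1). V-G). \<phi> (insert x G) x)"
  proof (rule sum.reindex_bij_witness[where j="\<lambda>(F,x). (F-{x},x)" and i="\<lambda>(G,x). (insert x G, x)"])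
    fix a assume "a \<in> (SIGMA F:ks V k. F)"
    then show "(case case a of (F, x) \<Rightarrow> (F - {x}, x) of (G, x) \<Rightarrow> (insert x G, x)) = a" by auto
  next
    fix a assume "a \<in> (SIGMA F:ks V k. F)"
    then show "(case a of (F, x) \<Rightarrow> (F - {x}, x)) \<in> (SIGMA G:ks V (k-1). V-G)"
      using assms by (auto simp: ks_def card_insert_if dest: rev_finite_subset[OF assms(1)])
  next
    fix b assume "b \<in> (SIGMA G:ks V (k-1). V-G)"
    then show "(case case b of (G, x) \<Rightarrow> (insert x G, x) of (F, x) \<Rightarrow> (F - {x}, x)) = b" by auto
  next
    fix b assume "b \<in> (SIGMA G:ks V (k-1). V-G)"
    then show "(case b of (G, x) \<Rightarrow> (insert x G, x)) \<in> (SIGMA F:ks V k. F)"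
      using assms by (auto simp: ks_def card_insert_if dest: rev_finite_subset[OF assms(1)])
  next
    fix a assume "a \<in> (SIGMA F:ks V k. F)"
    then show "(case case a of (F, x) \<Rightarrow> (F - {x}, x) of (G, x) \<Rightarrow> \<phi> (insert x G) x) = (case a of (F, x) \<Rightarrow> \<phi> F x)"
      by (auto simp: insert_absorb)
  qed
  also have "\<dots> = (\<Sum>G\<in>ks V (k-1). \<Sum>x\<in>V-G. \<phi> (insert x G) x)"
    using fin1 assms by (intro sum.Sigma[symmetric]) auto
  finally show ?thesis .
qed

lemma cocycle:
  assumes "finite H"
  shows "(\<Sum>z\<in>H. sg (H - {z}) z * dl g (H - {z})) = 0"
proof -
  define c where "c = (\<lambda>(z,w). sg (H - {z}) z * (sg (H - {z} - {w}) w * g (H - {z} - {w})))"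
  define S where "S = (SIGMA z:H. H - {z})"
  have finS: "finite S" using assms unfolding S_def by auto
  have "(\<Sum>z\<in>H. sg (H - {z}) z * dl g (H - {z})) = (\<Sum>z\<in>H. \<Sum>w\<in>H-{z}. c (z,w))"
    by (simp add: dl_def c_def sum_distrib_left)
  also have "\<dots> = sum c S" using sum.Sigma[of H "\<lambda>z. H-{z}" "\<lambda>z w. c (z,w)"] assms by (simp add: S_def)
  finally have e1: "(\<Sum>z\<in>H. sg (H - {z}) z * dl g (H - {z})) = sum c S" .
  have anti: "c (w,z) = - c (z,w)" if "(z,w) \<in> S" for z w
  proof -
    define G where "G = H - {z,w}"
    have zw: "z \<in> H" "w \<in> H" "z \<noteq> w" using that by (auto simp: S_def)
    have h1: "H - {z} = insert w G" "H - {w} = insert z G" using zw by (auto simp: G_def)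
    have h2: "H - {z} - {w} = G" "H - {w} - {z} = G" by (auto simp: G_def)
    have fG: "finite G" using assms by (simp add: G_def)
    have sw: "sg G w * sg (insert w G) z = - (sg G z * sg (insert z G) w)"
      using sign_swap[OF fG, of w z] zw by (auto simp: G_def)
    have "c (w,z) = sg (insert z G) w * (sg G z * g G)" using zw by (simp add: c_def h1 h2 G_def insert_Diff_if)
    also have "\<dots> = - (sg (insert w G) z * (sg G w * g G))" using sw by (simp add: algebra_simps)
    also have "\<dots> = - c (z,w)" using zw by (simp add: c_def h1 h2 G_def insert_Diff_if)
    finally show ?thesis .
  qed
  have "sum c S = sum (\<lambda>(z,w). c (w,z)) S"
    by (rule sum.reindex_bij_witness[where i="\<lambda>(z,w). (w,z)" and j="\<lambda>(z,w). (w,z)"]) (auto simp: S_def)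
  also have "\<dots> = sum (\<lambda>p. - c p) S" by (intro sum.cong) (auto simp: anti)
  also have "\<dots> = - sum c S" by (simp add: sum_negf)
  finally have "sum c S = 0" by simp
  with e1 show ?thesis by simp
qed

lemma sign_rel:
  assumes "finite F" "x \<in> F" "y \<notin> F"
  shows "sg (F-{x}) x * sg (F-{x}) y = - (sg F y * sg (insert y (F-{x})) x)"
proof -
  define G where "G = F - {x}"
  have fG: "finite G" using assms by (simp add: G_def)
  have FG: "insert x G = F" using assms by (auto simp: G_def)
  have sw: "sg G x * sg F y = - (sg G y * sg (insert y G) x)"
    using sign_swap[OF fG, of x y] assms FG by (auto simp: G_def)
  have "sg G x * sg G y = sg G x * sg G y * (sg F y * sg F y)" by (simp add: sg_sq)
  also have "\<dots> = (sg G x * sg F y) * sg G y * sg F y" by (simp add: algebra_simps)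
  also have "\<dots> = - (sg G y * sg G y) * sg (insert y G) x * sg F y" using sw by (simp add: algebra_simps)
  also have "\<dots> = - (sg F y * sg (insert y G) x)" by (simp add: sg_sq)
  finally show ?thesis by (simp add: G_def)
qed

lemma key:
  assumes "finite V" "k \<ge> 1" "F \<in> ks V k" "y \<in> V - F"
    and hb: "\<forall>F'\<in>ks V k. b F' = dl g F'"
  shows "(\<Sum>x\<in>F. sg (F-{x}) x * sg (F-{x}) y * b (insert y (F-{x}))) = b F"
proof -
  have fF: "finite F" using assms by (auto simp: ks_def dest: rev_finite_subset[OF assms(1)])
  define H where "H = insert y F"
  have yF: "y \<notin> F" using assms by auto
  have c0: "(\<Sum>z\<in>H. sg (H - {z}) z * dl g (H - {z})) = 0" unfolding H_def by (rule cocycle) (use fF in simp)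
  have Hy: "H - {y} = F" using yF by (auto simp: H_def)
  have Hx: "H - {x} = insert y (F - {x})" if "x \<in> F" for x using that yF by (auto simp: H_def)
  have inks: "insert y (F - {x}) \<in> ks V k" if "x \<in> F" for x
    using that assms fF yF by (auto simp: ks_def card_insert_if)
  have "(\<Sum>z\<in>H. sg (H - {z}) z * dl g (H - {z})) =
        sg F y * b F + (\<Sum>x\<in>F. sg (insert y (F-{x})) x * b (insert y (F - {x})))"
    using fF yF hb assms(3) inks unfolding H_def
    by (simp add: sum.insert Hy[unfolded H_def] Hx[unfolded H_def])
  with c0 have e: "(\<Sum>x\<in>F. sg (insert y (F-{x})) x * b (insert y (F - {x}))) = - (sg F y * b F)" by simp
  have "(\<Sum>x\<in>F. sg (F-{x}) x * sg (F-{x}) y * b (insert y (F-{x})))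
      = (\<Sum>x\<in>F. - sg F y * (sg (insert y (F-{x})) x * b (insert y (F - {x}))))"
    by (intro sum.cong) (auto simp: sign_rel[OF fF _ yF])
  also have "\<dots> = - sg F y * (\<Sum>x\<in>F. sg (insert y (F-{x})) x * b (insert y (F - {x})))"
    by (simp add: sum_distrib_left)
  also have "\<dots> = b F" using e by (simp add: sg_sq)
  finally show ?thesis .
qed

lemma ks_finite: "finite V \<Longrightarrow> F \<in> ks V m \<Longrightarrow> finite F"
  by (auto simp: ks_def dest: rev_finite_subset)

lemma cob_eq:
  assumes "finite V" "k \<ge> 1" "F \<in> ks V k"
  shows "(\<Sum>G\<in>ks V (k-1). incidence F G * g G) = dl g F"
proof -
  have fF: "finite F" using assms ks_finite by blast
  have inj: "inj_on (\<lambda>x. F - {x}) F" by (auto simp: inj_on_def)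
  have "dl g F = (\<Sum>x\<in>F. incidence F (F - {x}) * g (F - {x}))"
    unfolding dl_def
  proof (intro sum.cong refl)
    fix x assume "x \<in> F"
    then have "incidence F (F - {x}) = sg (F-{x}) x"
      using inc_insert[of "F-{x}" x] fF by (simp add: insert_absorb)
    then show "sg (F - {x}) x * g (F - {x}) = incidence F (F - {x}) * g (F - {x})" by simp
  qed
  also have "\<dots> = (\<Sum>G\<in>(\<lambda>x. F - {x}) ` F. incidence F G * g G)"
    by (simp add: sum.reindex[OF inj])
  also have "\<dots> = (\<Sum>G\<in>ks V (k-1). incidence F G * g G)"
  proof (rule sum.mono_neutral_left)
    show "finite (ks V (k-1))" using assms finite_ks by blast
    show "(\<lambda>x. F - {x}) ` F \<subseteq> ks V (k-1)" using assms fF by (auto simp: ks_def)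
    show "\<forall>i\<in>ks V (k - 1) - (\<lambda>x. F - {x}) ` F. incidence F i * g i = 0"
    proof
      fix G assume G: "G \<in> ks V (k - 1) - (\<lambda>x. F - {x}) ` F"
      have "incidence F G = 0"
      proof (rule ccontr)
        assume "incidence F G \<noteq> 0"
        then have "G \<subseteq> F" "card (F - G) = 1" by (auto simp: incidence_def split: if_splits)
        then obtain x where "F - G = {x}" by (auto simp: card_Suc_eq)
        then have "x \<in> F" "G = F - {x}" using \<open>G \<subseteq> F\<close> by auto
        then show False using G by auto
      qed
      then show "incidence F G * g G = 0" by simp
    qed
  qed
  finally show ?thesis by simp
qed

lemma adjoint:
  assumes "finite V" "k \<ge> 1"
  shows "(\<Sum>G\<in>ks V (k-1). ds V b G * h G) = (\<Sum>F\<in>ks V k. b F * dl h F)"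
proof -
  have "(\<Sum>F\<in>ks V k. b F * dl h F) = (\<Sum>F\<in>ks V k. \<Sum>x\<in>F. b F * sg (F-{x}) x * h (F-{x}))"
    by (simp add: dl_def sum_distrib_left mult.assoc)
  also have "\<dots> = (\<Sum>G\<in>ks V (k-1). \<Sum>x\<in>V-G. b (insert x G) * sg (insert x G-{x}) x * h (insert x G-{x}))"
    by (rule reindex_pairs[OF assms])
  also have "\<dots> = (\<Sum>G\<in>ks V (k-1). \<Sum>x\<in>V-G. b (insert x G) * sg G x * h G)"
    by (intro sum.cong refl) (auto simp: insert_Diff_if ks_def)
  also have "\<dots> = (\<Sum>G\<in>ks V (k-1). ds V b G * h G)"
    by (simp add: ds_def sum_distrib_right sum_distrib_left mult.commute mult.left_commute)
  finally show ?thesis by simp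
qed

lemma claimA:
  assumes "finite V" "k \<ge> 1" "F \<in> ks V k"
    and hb: "\<forall>F'\<in>ks V k. b F' = dl g F'"
  shows "dl (ds V b) F = real (card V) * b F"
proof -
  have fF: "finite F" using assms ks_finite by blast
  have FV: "F \<subseteq> V" "card F = k" using assms by (auto simp: ks_def)
  have "dl (ds V b) F = (\<Sum>x\<in>F. b F + (\<Sum>y\<in>V-F. sg (F-{x}) x * sg (F-{x}) y * b (insert y (F-{x}))))"
    unfolding dl_def
  proof (intro sum.cong refl)
    fix x assume x: "x \<in> F"
    have e: "V - (F - {x}) = insert x (V - F)" using x FV by auto
    have "ds V b (F - {x}) = sg (F-{x}) x * b F + (\<Sum>y\<in>V-F. sg (F-{x}) y * b (insert y (F-{x})))"
      unfolding ds_def e using assms(1) x by (subst sum.insert) (auto simp: insert_absorb)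
    then show "sg (F - {x}) x * ds V b (F - {x}) = b F + (\<Sum>y\<in>V-F. sg (F-{x}) x * sg (F-{x}) y * b (insert y (F-{x})))"
      by (simp only: ring_distribs sum_distrib_left mult.assoc[symmetric] sg_sq mult_1)
  qed
  also have "\<dots> = real k * b F + (\<Sum>y\<in>V-F. \<Sum>x\<in>F. sg (F-{x}) x * sg (F-{x}) y * b (insert y (F-{x})))"
    by (simp only: sum.distrib sum_constant FV sum.swap[of _ F "V-F"])
  also have "\<dots> = real k * b F + (\<Sum>y\<in>V-F. b F)"
    using key[OF assms(1,2,3) _ hb] by simp
  also have "\<dots> = real (card V) * b F"
    using FV assms(1) card_mono[OF assms(1) FV(1)] by (simp add: card_Diff_subset fF of_nat_diff algebra_simps)
  finally show ?thesis .
qed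

definition dg :: "'a set \<Rightarrow> 'a set set \<Rightarrow> 'a set \<Rightarrow> nat" where
  "dg V X F = card {u\<in>V - F. insert u F \<in> X}"

lemma adj_eq:
  fixes X :: "'a::linorder set set"
  assumes "finite V" "k \<ge> 1" "F \<in> ks V k" "faces_card X k = ks V k"
    and hb: "\<forall>F'\<in>ks V k. b F' = dl g F'"
  shows "adj_apply X k b F = real (dg V X F) * b F"
proof -
  have fF: "finite F" using assms ks_finite by blast
  have FV: "F \<subseteq> V" "card F = k" using assms by (auto simp: ks_def)
  define \<phi> where "\<phi> = (\<lambda>(x,y). insert y (F - {x}))"
  define P where "P = F \<times> (V - F)"
  have finP: "finite P" using assms fF by (simp add: P_def)
  have phiks: "\<phi> p \<in> ks V k" if "p \<in> P" for p
    using that FV fF assms(2) by (auto simp: \<phi>_def P_def ks_def card_insert_if)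
  have inj: "inj_on \<phi> P"
  proof (rule inj_onI)
    fix p q assume pq: "p \<in> P" "q \<in> P" "\<phi> p = \<phi> q"
    obtain x y where p: "p = (x,y)" by force
    obtain x' y' where q: "q = (x',y')" by force
    have h: "x \<in> F" "y \<in> V" "y \<notin> F" "x' \<in> F" "y' \<in> V" "y' \<notin> F" using pq p q by (auto simp: P_def)
    have e: "insert y (F - {x}) = insert y' (F - {x'})" using pq p q by (simp add: \<phi>_def)
    have yy: "y = y'" using e h by blast
    have "x \<notin> insert y (F - {x})" using h by auto
    then have "x \<notin> F - {x'}" using e by simp
    then have "x = x'" using h by blast
    moreover note yy
    ultimately show "p = q" using p q by simp
  qed
  have adjphi: "adj_entry X k F (\<phi> (x,y)) = (if insert y F \<in> X then sg (F-{x}) x * sg (F-{x}) y else 0)"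
    if "(x,y) \<in> P" for x y
  proof -
    have h: "x \<in> F" "y \<in> V" "y \<notin> F" using that by (auto simp: P_def)
    have i1: "F \<inter> \<phi> (x,y) = F - {x}" using h by (auto simp: \<phi>_def)
    have u1: "F \<union> \<phi> (x,y) = insert y F" using h by (auto simp: \<phi>_def)
    have c1: "card (F - {x}) = k - 1" using h FV fF by simp
    have c2: "card (insert y F) = k + 1" using h FV fF by simp
    have in1: "incidence F (F - {x}) = sg (F-{x}) x"
      using inc_insert[of "F-{x}" x] fF h by (simp add: insert_absorb)
    have in2: "incidence (\<phi> (x,y)) (F - {x}) = sg (F-{x}) y"
      using inc_insert[of "F-{x}" y] fF h by (simp add: \<phi>_def)
    show ?thesis unfolding adj_entry_def i1 u1 in1 in2 using c1 c2 by (simp add: faces_card_def)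
  qed
  have "adj_apply X k b F = (\<Sum>G\<in>ks V k. adj_entry X k F G * b G)"
    by (simp add: adj_apply_def assms(4))
  also have "\<dots> = (\<Sum>G\<in>\<phi> ` P. adj_entry X k F G * b G)"
  proof (rule sum.mono_neutral_right)
    show "finite (ks V k)" using assms finite_ks by blast
    show "\<phi> ` P \<subseteq> ks V k" using phiks by blast
    show "\<forall>G\<in>ks V k - \<phi> ` P. adj_entry X k F G * b G = 0"
    proof
      fix G assume G: "G \<in> ks V k - \<phi> ` P"
      have GV: "G \<subseteq> V" "card G = k" "finite G" using G assms(1) by (auto simp: ks_def dest: rev_finite_subset)
      have "adj_entry X k F G = 0"
      proof (rule ccontr)
        assume "adj_entry X k F G \<noteq> 0"
        then have ci: "card (F \<inter> G) = k - 1" by (auto simp: adj_entry_def split: if_splits)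
        have "card (F - G) = 1" using card_Diff_subset_Int[of F G] fF ci FV assms(2) by simp
        then obtain x where x: "F - G = {x}" by (auto simp: card_Suc_eq)
        have "card (G - F) = 1" using card_Diff_subset_Int[of G F] GV ci assms(2) by (simp add: Int_commute)
        then obtain y where y: "G - F = {y}" by (auto simp: card_Suc_eq)
        have "G = insert y (F - {x})" using x y by blast
        moreover have "(x,y) \<in> P" using x y GV by (auto simp: P_def)
        ultimately show False using G by (auto simp: \<phi>_def)
      qed
      then show "adj_entry X k F G * b G = 0" by simp
    qed
  qed
  also have "\<dots> = (\<Sum>p\<in>P. adj_entry X k F (\<phi> p) * b (\<phi> p))"
    by (rule sum.reindex[OF inj, unfolded comp_def])
  also have "\<dots> = (\<Sum>(x,y)\<in>P. (if insert y F \<in> X then sg (F-{x}) x * sg (F-{x}) y * b (insert y (F-{x})) else 0))"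
    by (intro sum.cong refl) (auto simp: adjphi, simp add: \<phi>_def)
  also have "\<dots> = (\<Sum>x\<in>F. \<Sum>y\<in>V-F. (if insert y F \<in> X then sg (F-{x}) x * sg (F-{x}) y * b (insert y (F-{x})) else 0))"
    unfolding P_def by (rule sum.cartesian_product[symmetric])
  also have "\<dots> = (\<Sum>y\<in>V-F. \<Sum>x\<in>F. (if insert y F \<in> X then sg (F-{x}) x * sg (F-{x}) y * b (insert y (F-{x})) else 0))"
    by (rule sum.swap)
  also have "\<dots> = (\<Sum>y\<in>V-F. (if insert y F \<in> X then b F else 0))"
  proof (intro sum.cong refl)
    fix y assume y: "y \<in> V - F"
    show "(\<Sum>x\<in>F. (if insert y F \<in> X then sg (F-{x}) x * sg (F-{x}) y * b (insert y (F-{x})) else 0)) = (if insert y F \<in> X then b F else 0)"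
      using key[OF assms(1,2,3) y hb] by simp
  qed
  also have "\<dots> = real (dg V X F) * b F"
    using assms(1) by (simp add: sum.If_cases dg_def Int_def)
  finally show ?thesis .
qed

lemma sq_sum_le:
  fixes c :: "'b \<Rightarrow> real"
  shows "(\<Sum>x\<in>A. c x)\<^sup>2 \<le> real (card A) * (\<Sum>x\<in>A. (c x)\<^sup>2)"
  using Cauchy_Schwarz_ineq_sum[of "\<lambda>x. 1" c A] by simp

lemma claimC:
  assumes "finite V" "k \<ge> 1"
    and hb: "\<forall>F'\<in>ks V k. b F' = dl g F'"
    and u: "\<forall>F\<in>ks V k. u F \<ge> 0"
  shows "(\<Sum>F\<in>ks V k. u F * (b F)\<^sup>2) \<le> real k * (\<Sum>G\<in>ks V (k-1). (g G)\<^sup>2 * (\<Sum>x\<in>V-G. u (insert x G)))"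
proof -
  have "(\<Sum>F\<in>ks V k. u F * (b F)\<^sup>2) \<le> (\<Sum>F\<in>ks V k. u F * (real k * (\<Sum>x\<in>F. (g (F-{x}))\<^sup>2)))"
  proof (rule sum_mono)
    fix F assume F: "F \<in> ks V k"
    have "(b F)\<^sup>2 = (\<Sum>x\<in>F. sg (F-{x}) x * g (F-{x}))\<^sup>2" using hb F by (simp add: dl_def)
    also have "\<dots> \<le> real (card F) * (\<Sum>x\<in>F. (sg (F-{x}) x * g (F-{x}))\<^sup>2)" by (rule sq_sum_le)
    also have "\<dots> = real k * (\<Sum>x\<in>F. (g (F-{x}))\<^sup>2)"
    proof -
      have "(sg (F-{x}) x * g (F-{x}))\<^sup>2 = (g (F-{x}))\<^sup>2" for x
        using sg_sq[of "F-{x}" x] by (simp add: power2_eq_square algebra_simps)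
      then show ?thesis using F by (simp add: ks_def)
    qed
    finally show "u F * (b F)\<^sup>2 \<le> u F * (real k * (\<Sum>x\<in>F. (g (F-{x}))\<^sup>2))"
      using u F by (simp add: mult_left_mono)
  qed
  also have "\<dots> = real k * (\<Sum>F\<in>ks V k. \<Sum>x\<in>F. u F * (g (F-{x}))\<^sup>2)"
    by (simp add: sum_distrib_left algebra_simps)
  also have "\<dots> = real k * (\<Sum>G\<in>ks V (k-1). \<Sum>x\<in>V-G. u (insert x G) * (g (insert x G-{x}))\<^sup>2)"
    by (simp add: reindex_pairs[OF assms(1,2)])
  also have "\<dots> = real k * (\<Sum>G\<in>ks V (k-1). (g G)\<^sup>2 * (\<Sum>x\<in>V-G. u (insert x G)))"
    by (intro arg_cong[where f="\<lambda>t. real k * t"] sum.cong refl)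
       (auto simp: sum_distrib_left insert_Diff_if mult.commute intro!: sum.cong)
  finally show ?thesis .
qed

theorem proposition3p7:
  fixes V :: "'a::linorder set" and X :: "'a set set" and k :: nat and d f :: real
  assumes "simplicial_complex V X"
    and "k \<ge> 1"
    and "complex_dim X k"
    and "complete_skeleton V X k"
    and "d > 0" and "f \<ge> 0"
    and "\<forall>F\<in>faces_card X (k - 1).
           (\<Sum>v\<in>V - F. (real (link_deg V X k F v) - d)\<^sup>2) \<le> f\<^sup>2 * (real (card V) - real k + 1)"
  shows "(\<forall>b\<in>coboundaries X k. cnorm X k b = 1 \<longrightarrow>
            \<bar>cinner X k (adj_apply X k b) b - d\<bar> \<le> real k * f)
       \<and> (\<forall>b\<in>coboundaries X k. \<forall>z. cnorm X k b = 1 \<and> cnorm X k z = 1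
            \<and> (\<forall>c\<in>coboundaries X k. cinner X k z c = 0) \<longrightarrow>
            \<bar>cinner X k (adj_apply X k b) z\<bar> \<le> real k * f)"
proof -
  have finV: "finite V" and XV: "X \<subseteq> Pow V" using assms(1) by (auto simp: simplicial_complex_def)
  have k1: "k \<ge> 1" by fact
  have KK: "faces_card X k = ks V k" using XV assms(4) by (auto simp: faces_card_def ks_def complete_skeleton_def)
  have K1: "faces_card X (k-1) = ks V (k-1)" using XV assms(4) by (auto simp: faces_card_def ks_def complete_skeleton_def)
  define n where "n = real (card V)"
  define w where "w = (\<lambda>F. real (dg V X F) - d)"
  have link: "link_deg V X k G x = dg V X (insert x G)" if G: "G \<in> ks V (k-1)" and x: "x \<in> V - G" for G x
  proof -
    have fG: "finite G" using G finV ks_finite by blast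
    have cG: "card G = k - 1" using G by (simp add: ks_def)
    have "{u\<in>V - G. u \<noteq> x \<and> G \<union> {u, x} \<in> faces_card X (k + 1)} = {u\<in>V - insert x G. insert u (insert x G) \<in> X}"
    proof (intro Collect_cong iffI)
      fix u assume "u \<in> V - G \<and> u \<noteq> x \<and> G \<union> {u, x} \<in> faces_card X (k + 1)"
      then show "u \<in> V - insert x G \<and> insert u (insert x G) \<in> X"
        by (auto simp: faces_card_def insert_commute)
    next
      fix u assume u: "u \<in> V - insert x G \<and> insert u (insert x G) \<in> X"
      have "card (insert u (insert x G)) = k + 1" using u x fG cG k1 by simp
      then show "u \<in> V - G \<and> u \<noteq> x \<and> G \<union> {u, x} \<in> faces_card X (k + 1)"
        using u by (auto simp: faces_card_def insert_commute)
    qed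
    then show ?thesis by (simp add: link_deg_def dg_def)
  qed
  have hyp: "(\<Sum>x\<in>V - G. (w (insert x G))\<^sup>2) \<le> f\<^sup>2 * (n - real k + 1)" if G: "G \<in> ks V (k-1)" for G
  proof -
    have "(\<Sum>x\<in>V - G. (w (insert x G))\<^sup>2) = (\<Sum>v\<in>V - G. (real (link_deg V X k G v) - d)\<^sup>2)"
      using link[OF G] by (simp add: w_def)
    then show ?thesis using assms(7) G K1 by (simp add: n_def)
  qed
  have cardVG: "real (card (V - G)) = n - real k + 1" if G: "G \<in> ks V (k-1)" for G
  proof -
    have "G \<subseteq> V" "card G = k - 1" using G by (auto simp: ks_def)
    moreover have "card G \<le> card V" using \<open>G \<subseteq> V\<close> finV card_mono by blast
    ultimately show ?thesis using k1 finV by (simp add: card_Diff_subset n_def of_nat_diff rev_finite_subset)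
  qed
  have unitcob: "\<exists>g. (\<forall>F\<in>ks V k. b F = dl g F) \<and> (\<Sum>G\<in>ks V (k-1). (g G)\<^sup>2) = 1 / n \<and> n \<ge> real k
       \<and> (\<forall>F\<in>ks V k. adj_apply X k b F = real (dg V X F) * b F) \<and> (\<Sum>F\<in>ks V k. b F * b F) = 1"
    if b: "b \<in> coboundaries X k" and nb: "cnorm X k b = 1" for b
  proof -
    obtain g0 where g0: "\<forall>H\<in>faces_card X k. b H = cobdry X (k - 1) g0 H" using b by (auto simp: coboundaries_def)
    have hb0: "\<forall>F\<in>ks V k. b F = dl g0 F"
      using g0 cob_eq[OF finV k1] unfolding cobdry_def KK K1 by simp
    have S1: "(\<Sum>F\<in>ks V k. b F * b F) = 1" using nb by (simp add: cnorm_def cinner_def KK)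
    then have "ks V k \<noteq> {}" by auto
    then obtain F0 where "F0 \<subseteq> V" "card F0 = k" by (auto simp: ks_def)
    then have nk: "n \<ge> real k" using card_mono[OF finV] by (auto simp: n_def)
    then have npos: "n > 0" using k1 by simp
    define g where "g = (\<lambda>G. (1/n) * ds V b G)"
    have dlg: "dl g F = (1/n) * dl (ds V b) F" for F by (simp add: g_def dl_def sum_distrib_left algebra_simps)
    have hb: "\<forall>F\<in>ks V k. b F = dl g F"
      using claimA[OF finV k1 _ hb0] npos by (simp add: dlg n_def)
    have "(\<Sum>G\<in>ks V (k-1). (g G)\<^sup>2) = (1/n)^2 * (\<Sum>G\<in>ks V (k-1). ds V b G * ds V b G)"
      by (simp add: g_def power2_eq_square sum_distrib_left algebra_simps)
    also have "\<dots> = (1/n)^2 * (\<Sum>F\<in>ks V k. b F * dl (ds V b) F)" using adjoint[OF finV k1, of b "ds V b"] by simp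
    also have "\<dots> = (1/n)^2 * (\<Sum>F\<in>ks V k. n * (b F * b F))"
      using claimA[OF finV k1 _ hb0] by (simp add: n_def algebra_simps)
    also have "\<dots> = 1 / n" using S1 npos by (simp add: sum_distrib_left[symmetric] power2_eq_square)
    finally have "(\<Sum>G\<in>ks V (k-1). (g G)\<^sup>2) = 1 / n" .
    moreover have "\<forall>F\<in>ks V k. adj_apply X k b F = real (dg V X F) * b F"
      using adj_eq[OF finV k1 _ KK hb0] by blast
    ultimately show ?thesis using hb nk S1 by blast
  qed
  have ratio: "real k * (f\<^sup>2 * (n - real k + 1)) * (1 / n) \<le> real k * f\<^sup>2" 
    and ratio1: "real k * ((n - real k + 1) * f) * (1 / n) \<le> real k * f"
    if "n \<ge> real k" for n
  proof -
    have np: "n > 0" using that k1 by simp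
    have "(n - real k + 1) / n \<le> 1" using np k1 by simp
    moreover have "(n - real k + 1) / n \<ge> 0" using np that by simp
    ultimately have i1: "real k * f\<^sup>2 * ((n - real k + 1) / n) \<le> real k * f\<^sup>2 * 1"
      and i2: "real k * f * ((n - real k + 1) / n) \<le> real k * f * 1"
      using assms(6) by (intro mult_left_mono; simp)+
    have e1: "real k * (f\<^sup>2 * (n - real k + 1)) * (1 / n) = real k * f\<^sup>2 * ((n - real k + 1) / n)"
      by simp
    have e2: "real k * ((n - real k + 1) * f) * (1 / n) = real k * f * ((n - real k + 1) / n)"
      by simp
    show "real k * (f\<^sup>2 * (n - real k + 1)) * (1 / n) \<le> real k * f\<^sup>2"
      "real k * ((n - real k + 1) * f) * (1 / n) \<le> real k * f"
      unfolding e1 e2 using i1 i2 by simp_all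
  qed
  show ?thesis
  proof (intro conjI ballI allI impI)
    fix b assume b: "b \<in> coboundaries X k" and nb: "cnorm X k b = 1"
    obtain g where hb: "\<forall>F\<in>ks V k. b F = dl g F" and gn: "(\<Sum>G\<in>ks V (k-1). (g G)\<^sup>2) = 1 / n"
      and nk: "n \<ge> real k" and A: "\<forall>F\<in>ks V k. adj_apply X k b F = real (dg V X F) * b F"
      and S1: "(\<Sum>F\<in>ks V k. b F * b F) = 1"
      using unitcob[OF b nb] by blast
    have "cinner X k (adj_apply X k b) b - d = (\<Sum>F\<in>ks V k. w F * (b F)\<^sup>2)"
    proof -
      have "cinner X k (adj_apply X k b) b = (\<Sum>F\<in>ks V k. real (dg V X F) * b F * b F)"
        unfolding cinner_def KK using A by (intro sum.cong) auto
      moreover have "(\<Sum>F\<in>ks V k. w F * (b F)\<^sup>2) = (\<Sum>F\<in>ks V k. real (dg V X F) * b F * b F - d * (b F * b F))"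
        by (rule sum.cong) (simp_all add: w_def power2_eq_square algebra_simps)
      moreover have "(\<Sum>F\<in>ks V k. real (dg V X F) * b F * b F - d * (b F * b F)) = (\<Sum>F\<in>ks V k. real (dg V X F) * b F * b F) - d * (\<Sum>F\<in>ks V k. b F * b F)"
        by (simp only: sum_subtractf sum_distrib_left)
      ultimately show ?thesis using S1 by simp
    qed
    also have "\<bar>\<dots>\<bar> \<le> (\<Sum>F\<in>ks V k. \<bar>w F\<bar> * (b F)\<^sup>2)"
      by (rule order_trans[OF sum_abs]) (simp add: abs_mult)
    also have "\<dots> \<le> real k * (\<Sum>G\<in>ks V (k-1). (g G)\<^sup>2 * (\<Sum>x\<in>V-G. \<bar>w (insert x G)\<bar>))"
      by (rule claimC[OF finV k1 hb]) simp
    also have "\<dots> \<le> real k * (\<Sum>G\<in>ks V (k-1). (g G)\<^sup>2 * ((n - real k + 1) * f))"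
    proof (rule mult_left_mono, rule sum_mono)
      fix G assume G: "G \<in> ks V (k-1)"
      have "(\<Sum>x\<in>V-G. \<bar>w (insert x G)\<bar>)\<^sup>2 \<le> real (card (V-G)) * (\<Sum>x\<in>V-G. \<bar>w (insert x G)\<bar>\<^sup>2)"
        by (rule sq_sum_le)
      also have "\<dots> \<le> (n - real k + 1) * (f\<^sup>2 * (n - real k + 1))"
        using mult_left_mono[OF hyp[OF G], of "n - real k + 1"] cardVG[OF G] nk by simp
      also have "\<dots> = ((n - real k + 1) * f)\<^sup>2" by (simp add: power2_eq_square algebra_simps)
      finally have "(\<Sum>x\<in>V-G. \<bar>w (insert x G)\<bar>) \<le> (n - real k + 1) * f"
        by (rule power2_le_imp_le) (use nk assms(6) in \<open>auto intro!: mult_nonneg_nonneg\<close>)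
      then show "(g G)\<^sup>2 * (\<Sum>x\<in>V-G. \<bar>w (insert x G)\<bar>) \<le> (g G)\<^sup>2 * ((n - real k + 1) * f)"
        by (rule mult_left_mono) simp_all
    qed simp
    also have "\<dots> = real k * ((n - real k + 1) * f) * (1/n)"
      by (simp only: sum_distrib_right[symmetric] gn) simp
    also have "\<dots> \<le> real k * f" using ratio1[OF nk] .
    finally show "\<bar>cinner X k (adj_apply X k b) b - d\<bar> \<le> real k * f" .
  next
    fix b z assume b: "b \<in> coboundaries X k"
      and hz: "cnorm X k b = 1 \<and> cnorm X k z = 1 \<and> (\<forall>c\<in>coboundaries X k. cinner X k z c = 0)"
    obtain g where hb: "\<forall>F\<in>ks V k. b F = dl g F" and gn: "(\<Sum>G\<in>ks V (k-1). (g G)\<^sup>2) = 1 / n"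
      and nk: "n \<ge> real k" and A: "\<forall>F\<in>ks V k. adj_apply X k b F = real (dg V X F) * b F"
      using unitcob[OF b] hz by blast
    have Z1: "(\<Sum>F\<in>ks V k. (z F)\<^sup>2) = 1" using hz by (simp add: cnorm_def cinner_def KK power2_eq_square)
    have Z0: "(\<Sum>F\<in>ks V k. z F * b F) = 0" using hz b by (simp add: cinner_def KK)
    have Ez: "cinner X k (adj_apply X k b) z = (\<Sum>F\<in>ks V k. (w F * b F) * z F)"
    proof -
      have "cinner X k (adj_apply X k b) z = (\<Sum>F\<in>ks V k. real (dg V X F) * b F * z F)"
        unfolding cinner_def KK using A by (intro sum.cong) auto
      moreover have "(\<Sum>F\<in>ks V k. (w F * b F) * z F) = (\<Sum>F\<in>ks V k. real (dg V X F) * b F * z F - d * (z F * b F))"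
        by (rule sum.cong) (simp_all add: w_def algebra_simps)
      moreover have "(\<Sum>F\<in>ks V k. real (dg V X F) * b F * z F - d * (z F * b F)) = (\<Sum>F\<in>ks V k. real (dg V X F) * b F * z F) - d * (\<Sum>F\<in>ks V k. z F * b F)"
        by (simp only: sum_subtractf sum_distrib_left)
      ultimately show ?thesis using Z0 by simp
    qed
    have "(cinner X k (adj_apply X k b) z)\<^sup>2 \<le> (\<Sum>F\<in>ks V k. (w F * b F)\<^sup>2) * (\<Sum>F\<in>ks V k. (z F)\<^sup>2)"
      unfolding Ez by (rule Cauchy_Schwarz_ineq_sum)
    also have "\<dots> = (\<Sum>F\<in>ks V k. (w F)\<^sup>2 * (b F)\<^sup>2)" using Z1 by (simp add: power_mult_distrib)
    also have "\<dots> \<le> real k * (\<Sum>G\<in>ks V (k-1). (g G)\<^sup>2 * (\<Sum>x\<in>V-G. (w (insert x G))\<^sup>2))"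
      by (rule claimC[OF finV k1 hb]) simp
    also have "\<dots> \<le> real k * (\<Sum>G\<in>ks V (k-1). (g G)\<^sup>2 * (f\<^sup>2 * (n - real k + 1)))"
    proof (rule mult_left_mono, rule sum_mono)
      fix G assume G: "G \<in> ks V (k-1)"
      show "(g G)\<^sup>2 * (\<Sum>x\<in>V-G. (w (insert x G))\<^sup>2) \<le> (g G)\<^sup>2 * (f\<^sup>2 * (n - real k + 1))"
        by (rule mult_left_mono[OF hyp[OF G]]) simp
    qed simp
    also have "\<dots> = real k * (f\<^sup>2 * (n - real k + 1)) * (1/n)"
      by (simp only: sum_distrib_right[symmetric] gn) simp
    also have "\<dots> \<le> real k * f\<^sup>2" using ratio[OF nk] .
    also have "\<dots> \<le> (real k * f)\<^sup>2"
    proof -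
      have "real k * f\<^sup>2 \<le> real k * real k * f\<^sup>2" using k1 by (intro mult_right_mono) auto
      then show ?thesis by (simp add: power2_eq_square algebra_simps)
    qed
    finally have "\<bar>cinner X k (adj_apply X k b) z\<bar>\<^sup>2 \<le> (real k * f)\<^sup>2" by simp
    then show "\<bar>cinner X k (adj_apply X k b) z\<bar> \<le> real k * f"
      by (rule power2_le_imp_le) (use assms(6) in simp)
  qed
qed

end
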